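(* Let $\kappa>0$, $u_0>0$, and let $u$ be the solution of $\frac{d}{dr}\big(u'/\sqrt{1+u'^2}\big)=\kappa u$, $u(0)=u_0$, $u'(0)=0$. Let $a>0$ and $0\le\gamma<\pi/2$ be such that $u$ is defined on $[0,a)$ and meets the vertical wall $r=a$ with contact angle $\gamma$, i.e. $\sin\psi(a)=\cos\gamma$, where $\sin\psi=u'/\sqrt{1+u'^2}$ (extended continuously to $r=a$). Then $q=u(a)-u(0)$ satisfies $$\frac1{\kappa u_0}\Big(1-\sqrt{1-a^2\kappa^2u_0^2}\Big)<q<\frac a{\cos\gamma}(1-\sin\gamma)$$ and $$q>\frac{2a(1-\sin\gamma)}{1+\sqrt{1+2\kappa a^2(1-\sin\gamma)}}.$$
   Context: $u$ is the profile of a $\kappa$-cylindrical capillary surface $z=u(x)$ between vertical plates $x=\pm a$; $\psi$ denotes the inclination angle of the graph. *)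

theory Defs
  imports Complex_Main
begin

definition sin_incl :: "real \<Rightarrow> real" where
  "sin_incl p = p / sqrt (1 + p\<^sup>2)"

end

theory Submission imports Defs "HOL-Analysis.Analysis" begin

lemma mvt_pos:
  fixes f f' :: "real \<Rightarrow> real"
  assumes "x < y" "continuous_on {x..y} f"
    "\<And>t. x < t \<Longrightarrow> t < y \<Longrightarrow> (f has_real_derivative f' t) (at t)"
    "\<And>t. x < t \<Longrightarrow> t < y \<Longrightarrow> f' t > 0"
  shows "f x < f y"
proof -
  obtain l z where z: "x < z" "z < y" "DERIV f z :> l" "f y - f x = (y - x) * l"
    using MVT[OF assms(1,2)] assms(3) real_differentiable_def by meson
  have "l = f' z" using DERIV_unique[OF z(3) assms(3)[OF z(1,2)]] by simp
  then have "l > 0" using assms(4) z by simp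
  then have "(y - x) * l > 0" using assms(1) by simp
  then show ?thesis using z by linarith
qed

lemma within_to_at:
  fixes f :: "real \<Rightarrow> real"
  assumes "(f has_real_derivative D) (at t within {0..<a})" "0 < t" "t < a"
  shows "(f has_real_derivative D) (at t)"
  using assms at_within_interior[of t "{0..<a}"] by simp

lemma sin_incl_props:
  fixes p :: real
  shows "\<bar>sin_incl p\<bar> < 1" "p = sin_incl p / sqrt (1 - (sin_incl p)\<^sup>2)"
    "sqrt (1 - (sin_incl p)\<^sup>2) = 1 / sqrt (1 + p\<^sup>2)"
proof -
  define w where "w = sqrt (1 + p\<^sup>2)"
  have q: "0 < 1 + p\<^sup>2" by (simp add: add_pos_nonneg)
  have pos: "w > 0" unfolding w_def using q by simp
  have sq: "w\<^sup>2 = 1 + p\<^sup>2" unfolding w_def using q by simp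
  have lt: "\<bar>p\<bar> < w" unfolding w_def using real_sqrt_less_mono[of "p\<^sup>2" "1+p\<^sup>2"] by simp
  have si: "sin_incl p = p / w" unfolding sin_incl_def w_def ..
  have "\<bar>p / w\<bar> = \<bar>p\<bar> / w" using pos by (simp add: abs_divide)
  also have "\<dots> < 1" using lt pos by (simp only: divide_less_eq_1_pos)
  finally show "\<bar>sin_incl p\<bar> < 1" unfolding si .
  have "(sin_incl p)\<^sup>2 = p\<^sup>2 / (1 + p\<^sup>2)" unfolding si power_divide sq ..
  moreover have "1 / (1 + p\<^sup>2) + p\<^sup>2 / (1 + p\<^sup>2) = 1" using q by (simp add: add_divide_distrib[symmetric])
  ultimately have e0: "1 - (sin_incl p)\<^sup>2 = 1 / (1 + p\<^sup>2)" by linarith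
  then show e: "sqrt (1 - (sin_incl p)\<^sup>2) = 1 / sqrt (1 + p\<^sup>2)" by (simp add: real_sqrt_divide)
  have "sin_incl p / sqrt (1 - (sin_incl p)\<^sup>2) = (p / w) / (1 / w)" unfolding e unfolding si w_def ..
  also have "\<dots> = p" using pos by simp
  finally show "p = sin_incl p / sqrt (1 - (sin_incl p)\<^sup>2)" ..
qed

lemma tsq_mono:
  fixes x y :: real
  assumes "0 \<le> x" "x < y" "y < 1"
  shows "x / sqrt (1 - x\<^sup>2) < y / sqrt (1 - y\<^sup>2)"
proof -
  have y2: "y\<^sup>2 < 1" using assms by (simp add: abs_square_less_1)
  have xy: "x\<^sup>2 \<le> y\<^sup>2" using assms by (simp add: power_mono)
  have p: "0 < sqrt (1 - y\<^sup>2)" using y2 by simp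
  have "sqrt (1 - y\<^sup>2) \<le> sqrt (1 - x\<^sup>2)" using xy by simp
  have px: "0 < sqrt (1 - x\<^sup>2)" using xy y2 by simp
  then have "x / sqrt (1 - x\<^sup>2) \<le> x / sqrt (1 - y\<^sup>2)"
    using assms p px by (intro divide_left_mono) auto
  also have "\<dots> < y / sqrt (1 - y\<^sup>2)" using p assms by (simp add: divide_strict_right_mono)
  finally show ?thesis .
qed

lemma mvt_eq:
  fixes f f' :: "real \<Rightarrow> real"
  assumes "x < y" "continuous_on {x..y} f"
    "\<And>t. x < t \<Longrightarrow> t < y \<Longrightarrow> (f has_real_derivative f' t) (at t)"
  shows "\<exists>z. x < z \<and> z < y \<and> f y - f x = (y - x) * f' z"
proof -
  obtain l z where z: "x < z" "z < y" "DERIV f z :> l" "f y - f x = (y - x) * l"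
    using MVT[OF assms(1,2)] assms(3) real_differentiable_def by meson
  have "l = f' z" using DERIV_unique[OF z(3) assms(3)[OF z(1,2)]] by simp
  then show ?thesis using z by blast
qed

lemma energy_alg: "inverse X / 2 * (- (2 * s * (k * v))) + k / 2 * (2 * v * (s / X)) = (0::real)"
proof -
  have "inverse X / 2 * (- (2 * s * (k * v))) = - (k * v * s / X)" by (simp add: field_simps)
  moreover have "k / 2 * (2 * v * (s / X)) = k * v * s / X" by (simp add: field_simps)
  ultimately show ?thesis by linarith
qed

lemma energy_deriv:
  fixes S u du :: "real \<Rightarrow> real"
  assumes pos: "0 < 1 - (S r)\<^sup>2" and d1: "(S has_real_derivative k * u r) (at r within I)"
   and d2: "(u has_real_derivative du r) (at r within I)" and dueq: "du r = S r / sqrt (1 - (S r)\<^sup>2)"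
  shows "((\<lambda>r. sqrt (1 - (S r)\<^sup>2) + k / 2 * (u r)\<^sup>2) has_real_derivative 0) (at r within I)"
proof -
  have a1: "((\<lambda>r. 1 - (S r)\<^sup>2) has_real_derivative - (2 * S r * (k * u r))) (at r within I)"
    using DERIV_diff[OF DERIV_const[of 1] DERIV_power[OF d1, of 2]] by (simp add: mult_ac)
  have a2: "((\<lambda>r. sqrt (1 - (S r)\<^sup>2)) has_real_derivative inverse (sqrt (1 - (S r)\<^sup>2)) / 2 * (- (2 * S r * (k * u r)))) (at r within I)"
    using DERIV_chain2[OF DERIV_real_sqrt[OF pos] a1] by simp
  have a3: "((\<lambda>r. k / 2 * (u r)\<^sup>2) has_real_derivative k / 2 * (2 * u r * du r)) (at r within I)"
    using DERIV_cmult[OF DERIV_power[OF d2, of 2], of "k/2"] by (simp add: mult_ac)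
  have z: "inverse (sqrt (1 - (S r)\<^sup>2)) / 2 * (- (2 * S r * (k * u r))) + k / 2 * (2 * u r * du r) = 0"
    unfolding dueq by (rule energy_alg)
  show ?thesis using DERIV_add[OF a2 a3] unfolding z .
qed

lemma cmp_deriv:
  fixes k t :: real
  assumes pos: "0 < 1 - (k * t)\<^sup>2" and k: "k \<noteq> 0"
  shows "((\<lambda>t. (1 - sqrt (1 - (k * t)\<^sup>2)) / k) has_real_derivative (k * t) / sqrt (1 - (k * t)\<^sup>2)) (at t)"
proof -
  have b0: "((\<lambda>t. k * t) has_real_derivative k * 1) (at t)" by (rule DERIV_cmult[OF DERIV_ident])
  have b1: "((\<lambda>t. 1 - (k * t)\<^sup>2) has_real_derivative - (2 * (k * t) * k)) (at t)"
    using DERIV_diff[OF DERIV_const[of 1] DERIV_power[OF b0, of 2]] by (simp add: mult_ac)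
  have b2: "((\<lambda>t. sqrt (1 - (k * t)\<^sup>2)) has_real_derivative inverse (sqrt (1 - (k * t)\<^sup>2)) / 2 * (- (2 * (k * t) * k))) (at t)"
    using DERIV_chain2[OF DERIV_real_sqrt[OF pos] b1] by simp
  have b3: "((\<lambda>t. (1 - sqrt (1 - (k * t)\<^sup>2)) / k) has_real_derivative (0 - inverse (sqrt (1 - (k * t)\<^sup>2)) / 2 * (- (2 * (k * t) * k))) / k) (at t)"
    by (rule DERIV_cdivide[OF DERIV_diff[OF DERIV_const b2]])
  have "(0 - inverse (sqrt (1 - (k * t)\<^sup>2)) / 2 * (- (2 * (k * t) * k))) / k = (k * t) / sqrt (1 - (k * t)\<^sup>2)"
    using k by (simp add: field_simps)
  then show ?thesis using b3 by simp
qed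

theorem mainTheorem9:
  fixes u du :: "real \<Rightarrow> real" and \<kappa> u\<^sub>0 a \<gamma> :: real
  assumes kpos: "\<kappa> > 0" and u0pos: "u\<^sub>0 > 0"
    and apos: "a > 0" and gam: "0 \<le> \<gamma>" "\<gamma> < pi / 2"
    and init: "u 0 = u\<^sub>0" "du 0 = 0"
    and deriv_u: "\<And>r. r \<in> {0..<a} \<Longrightarrow> (u has_real_derivative du r) (at r within {0..<a})"
    and ode: "\<And>r. r \<in> {0..<a} \<Longrightarrow>
               ((\<lambda>s. sin_incl (du s)) has_real_derivative \<kappa> * u r) (at r within {0..<a})"
    and cont: "continuous_on {0..a} u"
    and contact: "((\<lambda>s. sin_incl (du s)) \<longlongrightarrow> cos \<gamma>) (at_left a)"
  shows "(1 / (\<kappa> * u\<^sub>0)) * (1 - sqrt (1 - a\<^sup>2 * \<kappa>\<^sup>2 * u\<^sub>0\<^sup>2)) < u a - u 0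
       \<and> u a - u 0 < (a / cos \<gamma>) * (1 - sin \<gamma>)
       \<and> u a - u 0 > 2 * a * (1 - sin \<gamma>) / (1 + sqrt (1 + 2 * \<kappa> * a\<^sup>2 * (1 - sin \<gamma>)))"
proof -
  define S where "S = (\<lambda>s. sin_incl (du s))"
  define c where "c = cos \<gamma>"
  have Sder: "\<And>r. r \<in> {0..<a} \<Longrightarrow> (S has_real_derivative \<kappa> * u r) (at r within {0..<a})"
    using ode unfolding S_def by blast
  have SderI: "\<And>r. 0 < r \<Longrightarrow> r < a \<Longrightarrow> (S has_real_derivative \<kappa> * u r) (at r)"
    by (rule within_to_at[OF Sder]) auto
  have uderI: "\<And>r. 0 < r \<Longrightarrow> r < a \<Longrightarrow> (u has_real_derivative du r) (at r)"
    by (rule within_to_at[OF deriv_u]) auto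
  have Scont: "continuous_on {0..<a} S" by (rule DERIV_continuous_on[OF Sder])
  have Scont': "\<And>x y. 0 \<le> x \<Longrightarrow> y < a \<Longrightarrow> continuous_on {x..y} S"
    by (rule continuous_on_subset[OF Scont]) auto
  have ucont': "\<And>x y. 0 \<le> x \<Longrightarrow> y \<le> a \<Longrightarrow> continuous_on {x..y} u"
    by (rule continuous_on_subset[OF cont]) auto
  have Sb: "\<And>r. \<bar>S r\<bar> < 1" unfolding S_def using sin_incl_props by blast
  have Sb2: "\<And>r. (S r)\<^sup>2 < 1" using Sb by (simp add: abs_square_less_1)
  have dueq: "\<And>r. du r = S r / sqrt (1 - (S r)\<^sup>2)" unfolding S_def using sin_incl_props by blast
  have S0: "S 0 = 0" unfolding S_def sin_incl_def using init by simp
  have Slim: "(S \<longlongrightarrow> c) (at_left a)" using contact unfolding S_def c_def .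
  have ulim: "(u \<longlongrightarrow> u a) (at_left a)"
    using cont apos unfolding continuous_on_def by (metis atLeastAtMost_iff at_within_Icc_at_left less_eq_real_def order_refl)
  have cpos: "0 < c" unfolding c_def using gam by (intro cos_gt_zero_pi) auto
  have cle: "c \<le> 1" unfolding c_def by simp
  have singe: "0 \<le> sin \<gamma>" using gam by (intro sin_ge_zero) auto
  have sinc: "sqrt (1 - c\<^sup>2) = sin \<gamma>" unfolding c_def using singe by (simp add: sin_squared_eq[symmetric])
  have sinlt: "sin \<gamma> < 1"
  proof -
    have "(sin \<gamma>)\<^sup>2 < 1" using cpos unfolding c_def by (simp add: sin_squared_eq)
    then show ?thesis by (simp add: abs_square_less_1)
  qed
  define E where "E r = sqrt (1 - (S r)\<^sup>2) + \<kappa> / 2 * (u r)\<^sup>2" for r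
  have Eder: "(E has_real_derivative 0) (at r within {0..<a})" if r: "r \<in> {0..<a}" for r
  proof -
    have pos: "0 < 1 - (S r)\<^sup>2" using Sb2[of r] by simp
    show ?thesis unfolding E_def by (rule energy_deriv[where S=S and u=u and du=du, OF pos Sder[OF r] deriv_u[OF r] dueq[of r]])
  qed
  obtain C where C: "\<forall>r\<in>{0..<a}. E r = C"
    using has_field_derivative_zero_constant[of "{0..<a}" E] Eder by auto
  have Eeq: "\<And>r. r \<in> {0..<a} \<Longrightarrow> sqrt (1 - (S r)\<^sup>2) + \<kappa> / 2 * (u r)\<^sup>2 = 1 + \<kappa> / 2 * u\<^sub>0\<^sup>2"
  proof -
    fix r assume "r \<in> {0..<a}"
    then have "E r = E 0" using C apos by simp
    then show "sqrt (1 - (S r)\<^sup>2) + \<kappa> / 2 * (u r)\<^sup>2 = 1 + \<kappa> / 2 * u\<^sub>0\<^sup>2"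
      unfolding E_def S0 init by simp
  qed
  have u2: "\<And>r. r \<in> {0..<a} \<Longrightarrow> u\<^sub>0\<^sup>2 \<le> (u r)\<^sup>2"
  proof -
    fix r assume r: "r \<in> {0..<a}"
    have "sqrt (1 - (S r)\<^sup>2) \<le> 1" by simp
    then have "\<kappa> / 2 * u\<^sub>0\<^sup>2 \<le> \<kappa> / 2 * (u r)\<^sup>2" using Eeq[OF r] by linarith
    then show "u\<^sub>0\<^sup>2 \<le> (u r)\<^sup>2" using kpos by simp
  qed
  have upos: "\<And>r. r \<in> {0..<a} \<Longrightarrow> u r > 0"
  proof (rule ccontr)
    fix r assume r: "r \<in> {0..<a}" and n: "\<not> u r > 0"
    have "r \<noteq> 0" using n init u0pos by auto
    then obtain x where x: "0 \<le> x" "x \<le> r" "u x = 0"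
      using IVT2'[of u r 0 0] n init u0pos r ucont'[of 0 r] by auto
    then have "u\<^sub>0\<^sup>2 \<le> 0" using u2[of x] r by simp
    then show False using u0pos by simp
  qed
  have uge: "\<And>r. r \<in> {0..<a} \<Longrightarrow> u\<^sub>0 \<le> u r"
    using u2 upos by (meson less_imp_le power2_le_imp_le)
  have Spos: "\<And>r. 0 < r \<Longrightarrow> r < a \<Longrightarrow> 0 < S r"
  proof -
    fix r assume r: "0 < r" "r < a"
    show "0 < S r"
      using mvt_pos[of 0 r S "\<lambda>t. \<kappa> * u t"] r Scont' SderI upos kpos S0 by auto
  qed
  have ugt: "\<And>r. 0 < r \<Longrightarrow> r < a \<Longrightarrow> u\<^sub>0 < u r"
  proof -
    fix r assume r: "0 < r" "r < a"
    have "0 < (S r)\<^sup>2" using Spos[OF r] by simp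
    then have "sqrt (1 - (S r)\<^sup>2) < 1" by simp
    moreover have "sqrt (1 - (S r)\<^sup>2) + \<kappa> / 2 * (u r)\<^sup>2 = 1 + \<kappa> / 2 * u\<^sub>0\<^sup>2" using Eeq[of r] r by simp
    ultimately have "\<kappa> / 2 * u\<^sub>0\<^sup>2 < \<kappa> / 2 * (u r)\<^sup>2" by linarith
    then have "u\<^sub>0\<^sup>2 < (u r)\<^sup>2" using kpos by simp
    then show "u\<^sub>0 < u r" by (rule power2_less_imp_less) (use upos[of r] r in auto)
  qed
  have SgtL: "\<And>r. 0 < r \<Longrightarrow> r < a \<Longrightarrow> \<kappa> * u\<^sub>0 * r < S r"
  proof -
    fix r assume r: "0 < r" "r < a"
    have "(\<lambda>s. S s - \<kappa> * u\<^sub>0 * s) 0 < (\<lambda>s. S s - \<kappa> * u\<^sub>0 * s) r"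
    proof (rule mvt_pos[where f = "\<lambda>s. S s - \<kappa> * u\<^sub>0 * s" and f' = "\<lambda>t. \<kappa> * u t - \<kappa> * u\<^sub>0"])
      show "continuous_on {0..r} (\<lambda>s. S s - \<kappa> * u\<^sub>0 * s)"
        using Scont'[of 0 r] r by (intro continuous_intros) auto
      fix t assume t: "0 < t" "t < r"
      show "((\<lambda>s. S s - \<kappa> * u\<^sub>0 * s) has_real_derivative \<kappa> * u t - \<kappa> * u\<^sub>0) (at t)"
        using SderI[of t] t r by (auto intro!: derivative_eq_intros)
      show "0 < \<kappa> * u t - \<kappa> * u\<^sub>0" using ugt[of t] t r kpos by simp
    qed (use r in auto)
    then show "\<kappa> * u\<^sub>0 * r < S r" using S0 by simp
  qed
  have dupos: "\<And>r. 0 < r \<Longrightarrow> r < a \<Longrightarrow> 0 < du r"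
    using dueq Spos Sb2 by simp
  have umono: "\<And>x y. 0 \<le> x \<Longrightarrow> x < y \<Longrightarrow> y < a \<Longrightarrow> u x < u y"
  proof -
    fix x y :: real assume xy: "0 \<le> x" "x < y" "y < a"
    show "u x < u y" using mvt_pos[of x y u du] xy ucont'[of x y] uderI dupos by auto
  qed
  have kua: "\<kappa> * u\<^sub>0 * a < c"
  proof -
    define \<delta> where "\<delta> = S (a/2) - \<kappa> * u\<^sub>0 * (a/2)"
    have dpos: "0 < \<delta>" unfolding \<delta>_def using SgtL[of "a/2"] apos by simp
    have ev0: "\<forall>\<^sub>F s in at_left a. s \<in> {a/2<..<a}"
      using eventually_at_left_real[of "a/2" a] apos by simp
    have ev: "\<forall>\<^sub>F s in at_left a. \<delta> \<le> S s - \<kappa> * u\<^sub>0 * s"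
    proof (rule eventually_mono[OF ev0])
      fix s assume s: "s \<in> {a/2<..<a}"
      have "(\<lambda>s. S s - \<kappa> * u\<^sub>0 * s) (a/2) < (\<lambda>s. S s - \<kappa> * u\<^sub>0 * s) s"
      proof (rule mvt_pos[where f = "\<lambda>s. S s - \<kappa> * u\<^sub>0 * s" and f' = "\<lambda>t. \<kappa> * u t - \<kappa> * u\<^sub>0"])
        show "continuous_on {a/2..s} (\<lambda>s. S s - \<kappa> * u\<^sub>0 * s)"
          using Scont'[of "a/2" s] s apos by (intro continuous_intros) auto
        fix t assume t: "a/2 < t" "t < s"
        show "((\<lambda>s. S s - \<kappa> * u\<^sub>0 * s) has_real_derivative \<kappa> * u t - \<kappa> * u\<^sub>0) (at t)"
          using SderI[of t] t s apos by (auto intro!: derivative_eq_intros)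
        show "0 < \<kappa> * u t - \<kappa> * u\<^sub>0" using ugt[of t] t s apos kpos by simp
      qed (use s in auto)
      then show "\<delta> \<le> S s - \<kappa> * u\<^sub>0 * s" unfolding \<delta>_def by simp
    qed
    have "((\<lambda>s. S s - \<kappa> * u\<^sub>0 * s) \<longlongrightarrow> c - \<kappa> * u\<^sub>0 * a) (at_left a)"
      using Slim by (intro tendsto_intros) auto
    then have "\<delta> \<le> c - \<kappa> * u\<^sub>0 * a"
      using ev by (intro tendsto_lowerbound) auto
    then show ?thesis using dpos by simp
  qed
  (* convexity bound *)
  have Sconv: "\<And>r. 0 < r \<Longrightarrow> r < a \<Longrightarrow> S r < c / a * r"
  proof -
    fix r assume r: "0 < r" "r < a"
    obtain z1 where z1: "0 < z1" "z1 < r" "S r - S 0 = (r - 0) * (\<kappa> * u z1)"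
      using mvt_eq[of 0 r S "\<lambda>t. \<kappa> * u t"] r Scont'[of 0 r] SderI by auto
    define m where "m = \<kappa> * u z1"
    have Srm: "S r = r * m" using z1 S0 unfolding m_def by simp
    have mlt: "m < \<kappa> * u r" unfolding m_def using umono[of z1 r] z1 r kpos by simp
    have ev0: "\<forall>\<^sub>F s in at_left a. s \<in> {r<..<a}"
      using eventually_at_left_real[of r a] r by simp
    have ev: "\<forall>\<^sub>F s in at_left a. (s - r) * (\<kappa> * u r) \<le> S s - S r"
    proof (rule eventually_mono[OF ev0])
      fix s assume s: "s \<in> {r<..<a}"
      obtain z2 where z2: "r < z2" "z2 < s" "S s - S r = (s - r) * (\<kappa> * u z2)"
        using mvt_eq[of r s S "\<lambda>t. \<kappa> * u t"] r s Scont'[of r s] SderI by auto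
      have kk: "\<kappa> * u r \<le> \<kappa> * u z2" using umono[of r z2] z2 r s kpos by simp
      then show "(s - r) * (\<kappa> * u r) \<le> S s - S r" unfolding z2(3)
        using mult_left_mono[OF kk, of "s - r"] s by simp
    qed
    have l1: "((\<lambda>s. S s - S r) \<longlongrightarrow> c - S r) (at_left a)" using Slim by (intro tendsto_intros)
    have l2: "((\<lambda>s. (s - r) * (\<kappa> * u r)) \<longlongrightarrow> (a - r) * (\<kappa> * u r)) (at_left a)"
      by (intro tendsto_intros)
    have le: "(a - r) * (\<kappa> * u r) \<le> c - S r"
      by (rule tendsto_le[OF _ l1 l2 ev]) simp
    have "(a - r) * m < (a - r) * (\<kappa> * u r)" using mlt r by simp
    then have "a * m < c" using le Srm by (simp add: algebra_simps)
    then have "r * (a * m) < r * c" using r by simp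
    then have "S r * a < c * r" using Srm by (simp add: algebra_simps)
    then show "S r < c / a * r" using apos by (simp add: field_simps)
  qed
  have energy_a: "sin \<gamma> + \<kappa> / 2 * (u a)\<^sup>2 = 1 + \<kappa> / 2 * u\<^sub>0\<^sup>2"
  proof -
    have lim1: "((\<lambda>r. sqrt (1 - (S r)\<^sup>2) + \<kappa> / 2 * (u r)\<^sup>2) \<longlongrightarrow> sqrt (1 - c\<^sup>2) + \<kappa> / 2 * (u a)\<^sup>2) (at_left a)"
      using Slim ulim by (intro tendsto_intros)
    have ev0: "\<forall>\<^sub>F s in at_left a. s \<in> {0<..<a}"
      using eventually_at_left_real[of 0 a] apos by simp
    have ev: "\<forall>\<^sub>F s in at_left a. 1 + \<kappa> / 2 * u\<^sub>0\<^sup>2 = sqrt (1 - (S s)\<^sup>2) + \<kappa> / 2 * (u s)\<^sup>2"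
      by (rule eventually_mono[OF ev0]) (use Eeq in auto)
    have lim2: "((\<lambda>r. sqrt (1 - (S r)\<^sup>2) + \<kappa> / 2 * (u r)\<^sup>2) \<longlongrightarrow> 1 + \<kappa> / 2 * u\<^sub>0\<^sup>2) (at_left a)"
      by (rule Lim_transform_eventually[OF tendsto_const ev])
    have "sqrt (1 - c\<^sup>2) + \<kappa> / 2 * (u a)\<^sup>2 = 1 + \<kappa> / 2 * u\<^sub>0\<^sup>2"
      by (rule tendsto_unique[OF _ lim1 lim2]) simp
    then show ?thesis using sinc by simp
  qed
  define F1 where "F1 t = (1 - sqrt (1 - (\<kappa> * u\<^sub>0 * t)\<^sup>2)) / (\<kappa> * u\<^sub>0)" for t
  have B1: "F1 a < u a - u 0"
  proof -
    have "(\<lambda>t. u t - F1 t) 0 < (\<lambda>t. u t - F1 t) a"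
    proof (rule mvt_pos[where f = "\<lambda>t. u t - F1 t" and f' = "\<lambda>t. du t - (\<kappa> * u\<^sub>0 * t) / sqrt (1 - (\<kappa> * u\<^sub>0 * t)\<^sup>2)"])
      show "continuous_on {0..a} (\<lambda>t. u t - F1 t)"
        unfolding F1_def using cont kpos u0pos by (intro continuous_intros) auto
      fix t assume t: "0 < t" "t < a"
      have w0: "0 \<le> \<kappa> * u\<^sub>0 * t" using kpos u0pos t by simp
      have wS: "\<kappa> * u\<^sub>0 * t < S t" using SgtL t by simp
      have S1: "S t < 1" using Sb[of t] by simp
      have "(\<kappa> * u\<^sub>0 * t)\<^sup>2 < 1" using w0 wS S1 by (simp add: abs_square_less_1)
      then have pos: "0 < 1 - (\<kappa> * u\<^sub>0 * t)\<^sup>2" by simp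
      show "((\<lambda>t. u t - F1 t) has_real_derivative du t - (\<kappa> * u\<^sub>0 * t) / sqrt (1 - (\<kappa> * u\<^sub>0 * t)\<^sup>2)) (at t)"
        unfolding F1_def using uderI[OF t] cmp_deriv[OF pos] kpos u0pos by (intro DERIV_diff) auto
      show "0 < du t - (\<kappa> * u\<^sub>0 * t) / sqrt (1 - (\<kappa> * u\<^sub>0 * t)\<^sup>2)"
        using tsq_mono[OF w0 wS S1] dueq[of t] by simp
    qed (use apos in auto)
    moreover have "F1 0 = 0" unfolding F1_def by simp
    ultimately show ?thesis by simp
  qed
  define F2 where "F2 t = (1 - sqrt (1 - (c / a * t)\<^sup>2)) / (c / a)" for t
  have B2: "u a - u 0 < F2 a"
  proof -
    have "(\<lambda>t. F2 t - u t) 0 < (\<lambda>t. F2 t - u t) a"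
    proof (rule mvt_pos[where f = "\<lambda>t. F2 t - u t" and f' = "\<lambda>t. (c / a * t) / sqrt (1 - (c / a * t)\<^sup>2) - du t"])
      show "continuous_on {0..a} (\<lambda>t. F2 t - u t)"
        unfolding F2_def using cont cpos apos by (intro continuous_intros) auto
      fix t assume t: "0 < t" "t < a"
      have w0: "0 \<le> S t" using Spos t by (simp add: less_imp_le)
      have wS: "S t < c / a * t" using Sconv t by simp
      have "c / a * t < c" using t cpos apos by (simp add: field_simps)
      then have S1: "c / a * t < 1" using cle by simp
      have "(c / a * t)\<^sup>2 < 1" using w0 wS S1 by (simp add: abs_square_less_1)
      then have pos: "0 < 1 - (c / a * t)\<^sup>2" by simp
      show "((\<lambda>t. F2 t - u t) has_real_derivative (c / a * t) / sqrt (1 - (c / a * t)\<^sup>2) - du t) (at t)"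
        unfolding F2_def using uderI[OF t] cmp_deriv[OF pos] cpos apos by (intro DERIV_diff) auto
      show "0 < (c / a * t) / sqrt (1 - (c / a * t)\<^sup>2) - du t"
        using tsq_mono[OF w0 wS S1] dueq[of t] by simp
    qed (use apos in auto)
    moreover have "F2 0 = 0" unfolding F2_def by simp
    ultimately show ?thesis by simp
  qed
  have F1a: "F1 a = (1 / (\<kappa> * u\<^sub>0)) * (1 - sqrt (1 - a\<^sup>2 * \<kappa>\<^sup>2 * u\<^sub>0\<^sup>2))"
    unfolding F1_def by (simp add: power_mult_distrib mult_ac)
  have F2a: "F2 a = (a / cos \<gamma>) * (1 - sin \<gamma>)"
    unfolding F2_def using apos sinc unfolding c_def by simp
  define q where "q = u a - u 0"
  define B where "B = 1 - sin \<gamma>"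
  have F1pos: "0 < F1 a"
  proof -
    have "0 < (\<kappa> * u\<^sub>0 * a)\<^sup>2" using kpos u0pos apos by simp
    then have "sqrt (1 - (\<kappa> * u\<^sub>0 * a)\<^sup>2) < 1" by simp
    then show ?thesis unfolding F1_def using kpos u0pos by simp
  qed
  have qpos: "0 < q" using B1 F1pos unfolding q_def by simp
  have Bpos: "0 < B" unfolding B_def using sinlt by simp
  have ua: "u a = u\<^sub>0 + q" unfolding q_def using init by simp
  have e0: "B = \<kappa> / 2 * (u a)\<^sup>2 - \<kappa> / 2 * u\<^sub>0\<^sup>2" unfolding B_def using energy_a by linarith
  have e1: "2 * B = \<kappa> * q * (q + 2 * u\<^sub>0)" unfolding e0 ua by (simp add: power2_eq_square algebra_simps)
  define X where "X = \<kappa> * a * q"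
  define Y where "Y = \<kappa> * a * u\<^sub>0"
  have Xpos: "0 < X" unfolding X_def using kpos apos qpos by simp
  have Ylt: "Y < 1" unfolding Y_def using kua cle by (simp add: mult_ac)
  have e2: "2 * \<kappa> * a\<^sup>2 * B = X\<^sup>2 + 2 * X * Y"
  proof -
    have "2 * \<kappa> * a\<^sup>2 * B = \<kappa> * a\<^sup>2 * (2 * B)" by simp
    also have "\<dots> = \<kappa> * a\<^sup>2 * (\<kappa> * q * (q + 2 * u\<^sub>0))" using e1 by simp
    also have "\<dots> = X\<^sup>2 + 2 * X * Y" unfolding X_def Y_def by (simp add: power2_eq_square algebra_simps)
    finally show ?thesis .
  qed
  define R where "R = sqrt (1 + 2 * \<kappa> * a\<^sup>2 * B)"
  have "0 \<le> 2 * \<kappa> * a\<^sup>2 * B" using kpos Bpos by (intro mult_nonneg_nonneg) auto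
  then have Rnn: "0 \<le> 1 + 2 * \<kappa> * a\<^sup>2 * B" by linarith
  have R2: "R\<^sup>2 = 1 + 2 * \<kappa> * a\<^sup>2 * B" unfolding R_def using Rnn by simp
  have R0: "0 \<le> R" unfolding R_def using Rnn by simp
  have "2 * X * Y < 2 * X * 1" using Xpos Ylt by (intro mult_strict_left_mono) auto
  then have "1 + 2 * \<kappa> * a\<^sup>2 * B < (1 + X)\<^sup>2" unfolding e2 by (simp add: power2_eq_square algebra_simps)
  then have "R < sqrt ((1 + X)\<^sup>2)" unfolding R_def by (rule real_sqrt_less_mono)
  then have RX: "R - 1 < X" using Xpos by simp
  have "\<kappa> * a * (2 * a * B) = (R - 1) * (R + 1)" using R2 by (simp add: power2_eq_square algebra_simps)
  also have "\<dots> < X * (R + 1)" using RX R0 by (intro mult_strict_right_mono) auto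
  also have "\<dots> = \<kappa> * a * (q * (R + 1))" unfolding X_def by simp
  finally have "2 * a * B < q * (R + 1)" using kpos apos by simp
  then have B3: "2 * a * B / (1 + R) < q" using R0 by (simp add: pos_divide_less_eq add.commute)
  show ?thesis using B1 B2 B3 F1a F2a unfolding q_def B_def R_def by simp
qed

end
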